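(* Let $N\ge 1$ be an integer and let $\lambda>0$, $\mu>0$, $\Delta\ge 0$ be real numbers. For each integer $c\in\{1,\dots,N\}$ put $$a(c)=\lambda\Big(\Delta+\frac{c}{N\mu}\Big),\qquad P_b(c)=\frac{a(c)^{c}/c!}{\sum_{j=0}^{c}a(c)^{j}/j!}.$$ Then $P_b(c)$ is decreasing in $c$ on $\{1,\dots,N\}$; in particular its minimum is attained at $c=N$ (i.e. replication factor $m=1$).
   Context: Model: an edge system has $N$ workers split into $c$ groups of $m=N/c$ workers each (the replication factor). Jobs arrive as a Poisson process of rate $\lambda$; each arriving job is replicated to all $m$ workers of a free group and a job finding all groups busy is blocked (sent to the cloud). Each worker's service time is shifted exponential $\mathrm{SExp}(\Delta,\mu)$, i.e. $\Delta+Y$ with $Y$ exponential of rate $\mu$; the job-computing time of a replicated job (minimum of $m$ i.i.d. copies) is $\mathrm{SExp}(\Delta,m\mu)$ with mean $\Delta+\frac{1}{m\mu}=\Delta+\frac{c}{N\mu}$. The system is modeled as an M/G/c/c loss queue, so the job-blocking probability is the Erlang B formula $P_b(c)$ above with offered load $a(c)=\lambda\,\mathbb{E}[T_{\text{job}}]$. *)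

theory Defs
  imports Complex_Main
begin

definition offered_load :: "nat \<Rightarrow> real \<Rightarrow> real \<Rightarrow> real \<Rightarrow> nat \<Rightarrow> real" where
  "offered_load N lam mu Delta c = lam * (Delta + real c / (real N * mu))"

definition erlang_B :: "nat \<Rightarrow> real \<Rightarrow> real" where
  "erlang_B c a = (a ^ c / fact c) / (\<Sum>j=0..c. a ^ j / fact j)"

definition blocking_prob :: "nat \<Rightarrow> real \<Rightarrow> real \<Rightarrow> real \<Rightarrow> nat \<Rightarrow> real" where
  "blocking_prob N lam mu Delta c = erlang_B c (offered_load N lam mu Delta c)"

end

theory Submission
  imports Defs
begin

lemma fact_prod_aux:
  fixes c :: nat
  shows "k \<le> c \<Longrightarrow> fact (c - k) * (\<Prod>i<k. (real c - real i)) = (fact c :: real)"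
proof (induction k)
  case 0 then show ?case by simp
next
  case (Suc k)
  have "c - k = Suc (c - Suc k)" using Suc.prems by simp
  then have h1: "(fact (c - k) :: real) = real (c - k) * fact (c - Suc k)"
    by (metis fact_Suc of_nat_Suc)
  have h2: "real (c - k) = real c - real k" using Suc.prems by simp
  have "fact (c - Suc k) * (\<Prod>i<Suc k. (real c - real i)) = (fact (c - k) :: real) * (\<Prod>i<k. (real c - real i))"
    unfolding prod.lessThan_Suc h1 h2 by (simp add: mult_ac)
  then show ?case using Suc by simp
qed

definition gS :: "real \<Rightarrow> nat \<Rightarrow> real" where
  "gS a c = (\<Sum>k=0..c. \<Prod>i<k. (real c - real i) / a)"

lemma erlang_eq:
  assumes "a > 0"
  shows "erlang_B c a = 1 / gS a c"
proof -
  have "(\<Sum>j=0..c. a ^ j / fact j) = (\<Sum>k=0..c. a ^ (c - k) / fact (c - k))"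
    by (subst sum.atLeastAtMost_rev) simp
  also have "\<dots> = (\<Sum>k=0..c. a ^ c / fact c * (\<Prod>i<k. (real c - real i) / a))"
  proof (rule sum.cong)
    fix k assume "k \<in> {0..c}"
    then have kc: "k \<le> c" by simp
    have f: "fact (c - k) * (\<Prod>i<k. (real c - real i)) = (fact c :: real)"
      using fact_prod_aux kc by blast
    have p: "(\<Prod>i<k. (real c - real i) / a) = (\<Prod>i<k. (real c - real i)) / a ^ k"
      by (simp add: prod_dividef)
    have ak: "a ^ c = a ^ (c - k) * a ^ k" using kc by (simp add: power_add[symmetric])
    show "a ^ (c - k) / fact (c - k) = a ^ c / fact c * (\<Prod>i<k. (real c - real i) / a)"
      unfolding p ak f[symmetric] using assms kc by (simp add: field_simps)
  qed simp
  also have "\<dots> = a ^ c / fact c * gS a c"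
    unfolding gS_def by (simp add: sum_distrib_left)
  finally show ?thesis unfolding erlang_B_def using assms by simp
qed

lemma gS_pos: "a > 0 \<Longrightarrow> gS a c > 0"
  unfolding gS_def
  by (rule sum_pos2[where i=0]) (auto intro!: prod_nonneg divide_nonneg_pos)

theorem theorem1:
  fixes N :: nat and lam mu Delta :: real
  assumes "N \<ge> 1" and "lam > 0" and "mu > 0" and "Delta \<ge> 0"
  shows "(\<forall>c1\<in>{1..N}. \<forall>c2\<in>{1..N}. c1 < c2 \<longrightarrow>
            blocking_prob N lam mu Delta c2 < blocking_prob N lam mu Delta c1)
         \<and> (\<forall>c\<in>{1..N}. blocking_prob N lam mu Delta N \<le> blocking_prob N lam mu Delta c)"
proof -
  define A where "A c = offered_load N lam mu Delta c" for c
  define \<beta> where "\<beta> = lam / (real N * mu)"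
  have bpos: "\<beta> > 0" unfolding \<beta>_def using assms by simp
  have Aeq: "A c = lam * Delta + real c * \<beta>" for c
    unfolding A_def offered_load_def \<beta>_def by (simp add: algebra_simps)
  have Apos: "c \<ge> 1 \<Longrightarrow> A c > 0" for c
  proof -
    assume "c \<ge> 1"
    then have "real c * \<beta> > 0" using bpos by simp
    moreover have "lam * Delta \<ge> 0" using assms by simp
    ultimately show ?thesis unfolding Aeq by linarith
  qed
  have step: "gS (A c) c < gS (A (Suc c)) (Suc c)" if c1: "c \<ge> 1" for c
  proof -
    have a1: "A c > 0" using Apos c1 .
    have a2: "A (Suc c) > 0" using Apos c1 by simp
    have fac: "(real c - real i) / A c \<le> (real (Suc c) - real i) / A (Suc c)"
      if "i < c" for i
    proof -
      have e: "A (Suc c) = A c + \<beta>" by (simp add: Aeq algebra_simps)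
      have m1: "(real c - real i) * \<beta> \<le> real c * \<beta>"
        using bpos by (intro mult_right_mono) auto
      have "lam * Delta \<ge> 0" using assms by simp
      then have m2: "(real c - real i) * \<beta> \<le> A c" using m1 unfolding Aeq by linarith
      have "(real c - real i) * A (Suc c) = (real c - real i) * A c + (real c - real i) * \<beta>"
        unfolding e by (simp add: algebra_simps)
      also have "\<dots> \<le> (real c - real i) * A c + A c" using m2 by linarith
      also have "\<dots> = (real (Suc c) - real i) * A c" by (simp add: algebra_simps)
      finally have "(real c - real i) * A (Suc c) \<le> (real (Suc c) - real i) * A c" .
      then show ?thesis using a1 a2 by (simp add: divide_le_eq le_divide_eq mult.commute mult.left_commute del: of_nat_Suc)
    qed
    have trm: "(\<Prod>i<k. (real c - real i) / A c) \<le> (\<Prod>i<k. (real (Suc c) - real i) / A (Suc c))"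
      if "k \<le> c" for k
    proof (rule prod_mono)
      fix i assume "i \<in> {..<k}"
      then have "i < c" using that by simp
      then show "0 \<le> (real c - real i) / A c \<and> (real c - real i) / A c \<le> (real (Suc c) - real i) / A (Suc c)"
        using fac[of i] a1 by simp
    qed
    have last: "(\<Prod>i<Suc c. (real (Suc c) - real i) / A (Suc c)) > 0"
      by (rule prod_pos) (use a2 in auto)
    have "gS (A c) c \<le> (\<Sum>k=0..c. \<Prod>i<k. (real (Suc c) - real i) / A (Suc c))"
      unfolding gS_def by (rule sum_mono) (use trm in auto)
    also have "\<dots> < gS (A (Suc c)) (Suc c)"
      unfolding gS_def using last by simp
    finally show ?thesis .
  qed
  have B: "blocking_prob N lam mu Delta c = 1 / gS (A c) c" if "c \<ge> 1" for c
    unfolding blocking_prob_def A_def[symmetric] using erlang_eq Apos that by blast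
  have Bstep: "blocking_prob N lam mu Delta (Suc c) < blocking_prob N lam mu Delta c"
    if "c \<ge> 1" for c
  proof -
    have "gS (A c) c > 0" using gS_pos Apos that by blast
    then show ?thesis using B[of c] B[of "Suc c"] that step[OF that]
      by (simp add: divide_strict_left_mono)
  qed
  have mono: "blocking_prob N lam mu Delta (c1 + d + 1) < blocking_prob N lam mu Delta c1"
    if "c1 \<ge> 1" for c1 d
  proof (induction d)
    case 0 then show ?case using Bstep[OF that] by simp
  next
    case (Suc d)
    have "blocking_prob N lam mu Delta (c1 + Suc d + 1) < blocking_prob N lam mu Delta (c1 + d + 1)"
      using Bstep[of "c1 + d + 1"] that by simp
    then show ?case using Suc by simp
  qed
  have P1: "\<forall>c1\<in>{1..N}. \<forall>c2\<in>{1..N}. c1 < c2 \<longrightarrow>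
            blocking_prob N lam mu Delta c2 < blocking_prob N lam mu Delta c1"
  proof (intro ballI impI)
    fix c1 c2 assume h: "c1 \<in> {1..N}" "c2 \<in> {1..N}" "c1 < c2"
    then obtain d where "c2 = c1 + d + 1" by (metis add.commute add_Suc less_iff_Suc_add plus_1_eq_Suc)
    then show "blocking_prob N lam mu Delta c2 < blocking_prob N lam mu Delta c1"
      using mono h by simp
  qed
  moreover have "\<forall>c\<in>{1..N}. blocking_prob N lam mu Delta N \<le> blocking_prob N lam mu Delta c"
  proof
    fix c assume h: "c \<in> {1..N}"
    show "blocking_prob N lam mu Delta N \<le> blocking_prob N lam mu Delta c"
    proof (cases "c = N")
      case False
      then have "c < N" using h by simp
      moreover have "N \<in> {1..N}" using assms(1) by simp
      ultimately show ?thesis using P1 h by (meson less_imp_le)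
    qed simp
  qed
  ultimately show ?thesis by blast
qed

end
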